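(* Let $r\ge3$ be an integer and $\lambda\in[\frac15,1]$. Then for all $0<\epsilon\le1$, $f_{r,\lambda}(\epsilon)<\lambda^2$, where $f_{r,\lambda}(\epsilon)=\frac{1}{r-1}\sum_{i=1}^{r-1}\binom{r-1}{i}(1-\epsilon)^{r-1-i}\epsilon^{i-1}\frac{\lambda^2}{\lambda+(1-\lambda)2^{1-i}}$. *)

theory Defs
  imports Complex_Main
begin

definition f_rl :: "nat \<Rightarrow> real \<Rightarrow> real \<Rightarrow> real" where
  "f_rl r lam eps = (1 / real (r - 1)) *
     (\<Sum>i=1..r-1. real ((r - 1) choose i) * (1 - eps) ^ (r - 1 - i) * eps ^ (i - 1) *
        (lam\<^sup>2 / (lam + (1 - lam) * 2 powr (1 - real i))))"

end

theory Submission
  imports Defs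
begin

lemma key:
  fixes lam :: real and j :: nat
  assumes "1/5 \<le> lam" "lam \<le> 1" "1 \<le> j"
  shows "1 < real (j+1) * (lam + (1-lam)/2^j)"
proof -
  consider "j = 1" | "j = 2" | "j = 3" | "j \<ge> 4" using assms(3) by linarith
  then show ?thesis
  proof cases
    case 4
    have t: "(1-lam)/2^j \<ge> 0" using assms by simp
    have r5: "real (j+1) \<ge> 5" using 4 by simp
    show ?thesis
    proof (cases "lam < 1")
      case True
      hence "(1-lam)/2^j > 0" by simp
      hence "real (j+1) * (lam + (1-lam)/2^j) > real (j+1) * lam"
        using r5 by (intro mult_strict_left_mono) auto
      moreover have "real (j+1) * lam \<ge> 5 * lam" using r5 assms by (intro mult_right_mono) auto
      ultimately show ?thesis using assms by linarith
    next
      case False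
      hence "lam = 1" using assms by simp
      thus ?thesis using r5 by simp
    qed
  qed (use assms in \<open>auto simp: field_simps\<close>)
qed

lemma termle:
  fixes lam :: real and j :: nat
  assumes "1/5 \<le> lam" "lam \<le> 1"
  shows "lam\<^sup>2 / (lam + (1-lam) * 2 powr (1 - real (j+1))) / real (j+1) \<le> lam\<^sup>2"
    and "j \<ge> 1 \<Longrightarrow> lam\<^sup>2 / (lam + (1-lam) * 2 powr (1 - real (j+1))) / real (j+1) < lam\<^sup>2"
proof -
  have p: "2 powr (1 - real (j+1)) = 1/2^j"
    by (simp add: powr_minus powr_realpow inverse_eq_divide)
  define D where "D = lam + (1-lam)/2^j"
  have Dpos: "D > 0" unfolding D_def using assms by (simp add: add_pos_nonneg)
  have eq: "lam\<^sup>2 / (lam + (1-lam) * 2 powr (1 - real (j+1))) / real (j+1)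
      = lam\<^sup>2 / (real (j+1) * D)" unfolding D_def p by simp
  have l2: "lam\<^sup>2 > 0" using assms by simp
  have ge: "real (j+1) * D \<ge> 1"
  proof (cases "j = 0")
    case True thus ?thesis by (simp add: D_def)
  next
    case False thus ?thesis using key[OF assms, of j] unfolding D_def by simp
  qed
  show "lam\<^sup>2 / (lam + (1-lam) * 2 powr (1 - real (j+1))) / real (j+1) \<le> lam\<^sup>2"
    unfolding eq using ge l2 by (simp add: divide_le_eq mult_le_cancel_left1)
  assume "j \<ge> 1"
  hence "real (j+1) * D > 1" using key[OF assms, of j] unfolding D_def by simp
  thus "lam\<^sup>2 / (lam + (1-lam) * 2 powr (1 - real (j+1))) / real (j+1) < lam\<^sup>2"
    unfolding eq using l2 by (simp add: divide_less_eq)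
qed

theorem mainTheorem7:
  fixes r :: nat and lam eps :: real
  assumes "r \<ge> 3" and "1/5 \<le> lam" and "lam \<le> 1"
    and "0 < eps" and "eps \<le> 1"
  shows "f_rl r lam eps < lam\<^sup>2"
proof -
  obtain m where r: "r = m + 2" and m: "m \<ge> 1" using assms(1)
    by (intro that[of "r-2"]) auto
  define g where "g j = lam\<^sup>2 / (lam + (1-lam) * 2 powr (1 - real (j+1::nat)))" for j
  define a where "a j = real (m choose j) * (1-eps)^(m-j) * eps^j" for j
  have "f_rl r lam eps = (1 / real (m+1)) * (\<Sum>i=1..m+1. real ((m+1) choose i) * (1 - eps) ^ (m + 1 - i) * eps ^ (i - 1) *
        (lam\<^sup>2 / (lam + (1 - lam) * 2 powr (1 - real i))))"
    unfolding f_rl_def r by simp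
  also have "(\<Sum>i=1..m+1. real ((m+1) choose i) * (1 - eps) ^ (m + 1 - i) * eps ^ (i - 1) *
        (lam\<^sup>2 / (lam + (1 - lam) * 2 powr (1 - real i))))
     = (\<Sum>j=0..m. real ((m+1) choose (j+1)) * (1 - eps) ^ (m - j) * eps ^ j * g j)"
    unfolding g_def using sum.shift_bounds_cl_Suc_ivl[of "\<lambda>i. real ((m+1) choose i) * (1 - eps) ^ (m + 1 - i) * eps ^ (i - 1) * (lam\<^sup>2 / (lam + (1 - lam) * 2 powr (1 - real i)))" 0 m] by simp
  also have "(1 / real (m+1)) * \<dots> = (\<Sum>j=0..m. a j * (g j / real (j+1)))"
    unfolding sum_distrib_left
  proof (rule sum.cong[OF refl])
    fix j assume "j \<in> {0..m}"
    have bin: "real (m+1) * real (m choose j) = real ((m+1) choose (j+1)) * real (j+1)"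
      using Suc_times_binomial_eq[of m j] by (metis Suc_eq_plus1 of_nat_mult)
    have bin2: "real ((m+1) choose (j+1)) = real (m+1) * real (m choose j) / real (j+1)"
      using bin by (simp add: eq_divide_eq del: binomial_Suc_Suc of_nat_add)
    show "1 / real (m + 1) * (real (m + 1 choose (j + 1)) * (1 - eps) ^ (m - j) * eps ^ j * g j) =
         a j * (g j / real (j + 1))" unfolding a_def bin2
    proof -
      have gen: "\<And>M J C x y G::real. M > 0 \<Longrightarrow> J > 0 \<Longrightarrow> 1/M * (M*C/J*x*y*G) = C*x*y*(G/J)"
        by (simp add: field_simps)
      show "1 / real (m + 1) * (real (m + 1) * real (m choose j) / real (j + 1) * (1 - eps) ^ (m - j) * eps ^ j * g j) =
         real (m choose j) * (1 - eps) ^ (m - j) * eps ^ j * (g j / real (j + 1))"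
        by (rule gen) auto
    qed
  qed
  also have "\<dots> < (\<Sum>j=0..m. a j * lam\<^sup>2)"
  proof (rule sum_strict_mono_ex1)
    have ap: "a j \<ge> 0" for j unfolding a_def using assms by simp
    show "\<forall>x\<in>{0..m}. a x * (g x / real (x + 1)) \<le> a x * lam\<^sup>2"
      using termle(1)[OF assms(2,3)] ap unfolding g_def by (metis mult_left_mono)
    have "a m > 0" unfolding a_def using assms by simp
    thus "\<exists>x\<in>{0..m}. a x * (g x / real (x + 1)) < a x * lam\<^sup>2"
      using termle(2)[OF assms(2,3) m] m unfolding g_def
      by (intro bexI[of _ m]) (simp_all only: mult_strict_left_mono, simp)
  qed (simp)
  also have "\<dots> = lam\<^sup>2 * (\<Sum>j=0..m. a j)" by (simp add: sum_distrib_right mult.commute)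
  also have "(\<Sum>j=0..m. a j) = (eps + (1-eps))^m"
    unfolding a_def binomial_ring by (simp add: atLeast0AtMost mult_ac)
  finally show ?thesis by simp
qed

end
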